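(* Let $\alpha\in\mathbb{K}((t^{-1}))$ with $a_0(\alpha)=0$, and run the algorithm described in the context. Then: (1) All the partial quotients required by the algorithm exist, so $\beta$ and $\gamma$ are well defined, and $\alpha=\beta+\gamma$. Moreover, for every $n\ge1$: if $b_n$ is defined then $c_i=a_i(\alpha-[0;b_1,\dots,b_n])$ for every $1\le i\le n-1$; and if $c_n$ is defined then $b_i=a_i(\alpha-[0;c_1,\dots,c_n])$ and $c_i=a_i(\alpha-[0;b_1,\dots,b_n])$ for every $1\le i\le n$. (2) If $c_1$ is defined then $\deg c_1\ge 2\deg b_1+1$; and for every $n\ge2$, if $b_n$ is defined then $\deg b_n\ge\deg c_{n-1}+2$, and if $c_n$ is defined then $\deg c_n\ge \deg b_n+2$. (3) If $\alpha=p/q$ is a rational function ($p,q\in\mathbb{K}[t]$, $q\neq 0$), then the algorithm stops after at most $\deg(q)/2$ steps; in particular $\beta,\gamma\in\mathbb{K}(t)$.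
   Context: $\mathbb{K}((t^{-1}))$ is the field of formal Laurent series over a field $\mathbb{K}$, with $\deg\alpha=\sup\{-n:\alpha_n\ne0\}$ for $\alpha=\sum\alpha_nt^{-n}$. Every $\alpha$ has a unique continued fraction expansion $[a_0;a_1,a_2,\dots]$ with $a_n\in\mathbb{K}[t]$, $\deg a_n\ge1$ for $n\ge1$, finite iff $\alpha\in\mathbb{K}(t)$; $a_n(\alpha)$ denotes its $n$-th partial quotient. For polynomials $b_1,\dots,b_n$ of degree $\ge1$, $[0;b_1,\dots,b_n]$ is the finite continued fraction (equal to $0$ if $n=0$). Algorithm (Laurent analogue of Shulga's algorithm): given $\alpha$ with $a_0(\alpha)=0$, for $n=0,1,2,\dots$, with $b_1,\dots,b_n,c_1,\dots,c_n$ already defined: if $\alpha=[0;b_1,\dots,b_n]+[0;c_1,\dots,c_n]$, set $\beta=[0;b_1,\dots,b_n]$, $\gamma=[0;c_1,\dots,c_n]$ and stop. Otherwise set $b_{n+1}=a_{n+1}(\alpha-[0;c_1,\dots,c_n])$. If then $\alpha=[0;b_1,\dots,b_{n+1}]+[0;c_1,\dots,c_n]$, set $\beta=[0;b_1,\dots,b_{n+1}]$, $\gamma=[0;c_1,\dots,c_n]$ and stop. Otherwise set $c_{n+1}=a_{n+1}(\alpha-[0;b_1,\dots,b_{n+1}])$ and continue. If the algorithm never stops, set $\beta=[0;b_1,b_2,\dots]$ and $\gamma=[0;c_1,c_2,\dots]$. *)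

theory Defs
  imports "HOL-Computational_Algebra.Formal_Laurent_Series"
begin

text \<open>We model K((t^-1)) as the formal Laurent series 'a fls in the variable X = t^-1
  (finitely many negative powers of X = finitely many positive powers of t).
  Then deg alpha = - fls_subdegree alpha, and the library metric on fls is the
  usual (t^-1)-adic metric.\<close>

definition poly_fls :: "'a::field poly \<Rightarrow> 'a fls" where
  "poly_fls p = poly (map_poly fls_const p) fls_X_inv"

text \<open>Polynomial part (in t) of a Laurent series: the terms of degree >= 0 in t.\<close>
definition fls_polypart :: "'a::field fls \<Rightarrow> 'a poly" where
  "fls_polypart f = fls_prpart f + [:fls_nth f 0:]"

text \<open>Complete quotients of the continued fraction expansion; None = the expansion
  has already terminated.\<close>
fun cf_rem :: "'a::field fls \<Rightarrow> nat \<Rightarrow> 'a fls option" where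
  "cf_rem \<alpha> 0 = Some \<alpha>"
| "cf_rem \<alpha> (Suc n) = (case cf_rem \<alpha> n of None \<Rightarrow> None
     | Some r \<Rightarrow> (let s = r - poly_fls (fls_polypart r) in
                    if s = 0 then None else Some (inverse s)))"

definition cfq :: "'a::field fls \<Rightarrow> nat \<Rightarrow> 'a poly option" where
  "cfq \<alpha> n = map_option fls_polypart (cf_rem \<alpha> n)"

fun cfv :: "'a::field poly list \<Rightarrow> 'a fls" where
  "cfv [] = 0"
| "cfv (b # bs) = inverse (poly_fls b + cfv bs)"

text \<open>State of the algorithm: running with lists b_1..b_n, c_1..c_n; stopped with
  the final lists; or failed because a required partial quotient does not exist.\<close>
datatype 'p sstate = Run "'p list" "'p list" | Stop "'p list" "'p list" | Fail

fun sstep :: "'a::field fls \<Rightarrow> 'a poly sstate \<Rightarrow> 'a poly sstate" where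
  "sstep \<alpha> (Run bs cs) =
    (if \<alpha> = cfv bs + cfv cs then Stop bs cs
     else (case cfq (\<alpha> - cfv cs) (Suc (length bs)) of
             None \<Rightarrow> Fail
           | Some b \<Rightarrow>
               (if \<alpha> = cfv (bs @ [b]) + cfv cs then Stop (bs @ [b]) cs
                else (case cfq (\<alpha> - cfv (bs @ [b])) (Suc (length bs)) of
                        None \<Rightarrow> Fail
                      | Some c \<Rightarrow> Run (bs @ [b]) (cs @ [c])))))"
| "sstep \<alpha> (Stop bs cs) = Stop bs cs"
| "sstep \<alpha> Fail = Fail"

definition sh_state :: "'a::field fls \<Rightarrow> nat \<Rightarrow> 'a poly sstate" where
  "sh_state \<alpha> k = (sstep \<alpha> ^^ k) (Run [] [])"

definition sh_stops :: "'a::field fls \<Rightarrow> bool" where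
  "sh_stops \<alpha> = (\<exists>k bs cs. sh_state \<alpha> k = Stop bs cs)"

fun st_bs :: "'p sstate \<Rightarrow> 'p list" where
  "st_bs (Run bs cs) = bs" | "st_bs (Stop bs cs) = bs" | "st_bs Fail = []"

fun st_cs :: "'p sstate \<Rightarrow> 'p list" where
  "st_cs (Run bs cs) = cs" | "st_cs (Stop bs cs) = cs" | "st_cs Fail = []"

definition b_defined :: "'a::field fls \<Rightarrow> nat \<Rightarrow> bool" where
  "b_defined \<alpha> n = (\<exists>k. n \<le> length (st_bs (sh_state \<alpha> k)))"

definition c_defined :: "'a::field fls \<Rightarrow> nat \<Rightarrow> bool" where
  "c_defined \<alpha> n = (\<exists>k. n \<le> length (st_cs (sh_state \<alpha> k)))"

definition sh_b :: "'a::field fls \<Rightarrow> nat \<Rightarrow> 'a poly" where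
  "sh_b \<alpha> n = st_bs (sh_state \<alpha> (LEAST k. n \<le> length (st_bs (sh_state \<alpha> k)))) ! (n - 1)"

definition sh_c :: "'a::field fls \<Rightarrow> nat \<Rightarrow> 'a poly" where
  "sh_c \<alpha> n = st_cs (sh_state \<alpha> (LEAST k. n \<le> length (st_cs (sh_state \<alpha> k)))) ! (n - 1)"

definition sh_bcf :: "'a::field fls \<Rightarrow> nat \<Rightarrow> 'a fls" where
  "sh_bcf \<alpha> n = cfv (map (sh_b \<alpha>) [1..<Suc n])"

definition sh_ccf :: "'a::field fls \<Rightarrow> nat \<Rightarrow> 'a fls" where
  "sh_ccf \<alpha> n = cfv (map (sh_c \<alpha>) [1..<Suc n])"

definition sh_beta :: "'a::field fls \<Rightarrow> 'a fls" where
  "sh_beta \<alpha> = (if sh_stops \<alpha>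
      then cfv (st_bs (sh_state \<alpha> (SOME k. \<exists>bs cs. sh_state \<alpha> k = Stop bs cs)))
      else lim (sh_bcf \<alpha>))"

definition sh_gamma :: "'a::field fls \<Rightarrow> 'a fls" where
  "sh_gamma \<alpha> = (if sh_stops \<alpha>
      then cfv (st_cs (sh_state \<alpha> (SOME k. \<exists>bs cs. sh_state \<alpha> k = Stop bs cs)))
      else lim (sh_ccf \<alpha>))"

definition is_ratfun :: "'a::field fls \<Rightarrow> bool" where
  "is_ratfun x = (\<exists>p q. q \<noteq> 0 \<and> x = poly_fls p / poly_fls q)"

end

theory Submission
  imports Defs
begin

unbundle fps_syntax

lemma poly_fls_pCons: "poly_fls (pCons a p) = fls_const a + fls_X_inv * poly_fls p"
  unfolding poly_fls_def by (simp add: map_poly_pCons)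

lemma poly_fls_0 [simp]: "poly_fls 0 = 0"
  unfolding poly_fls_def by simp

lemma poly_fls_nth: "poly_fls p $$ k = (if k \<le> 0 then coeff p (nat (-k)) else 0)"
proof (induction p arbitrary: k)
  case 0 then show ?case by simp
next
  case (pCons a p)
  show ?case
  proof (cases "k = 0")
    case True then show ?thesis using pCons(2)[of 1] by (simp add: poly_fls_pCons fls_X_inv_times_conv_shift)
  next
    case False
    have "nat (-k) = Suc (nat (- (k+1)))" if "k < 0" using that by simp
    then show ?thesis using False pCons(2)[of "k+1"]
      by (auto simp: poly_fls_pCons fls_X_inv_times_conv_shift)
  qed
qed

definition small :: "'a::field fls \<Rightarrow> bool" where
  "small x \<longleftrightarrow> (\<forall>k\<le>0. x $$ k = 0)"

lemma coeff_polypart: "coeff (fls_polypart f) n = f $$ (- int n)"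
  unfolding fls_polypart_def by (cases n) auto

lemma polypart_eq0_iff: "fls_polypart x = 0 \<longleftrightarrow> small x"
proof
  assume "fls_polypart x = 0"
  then have "x $$ (- int n) = 0" for n using coeff_polypart[of x n] by simp
  then show "small x" unfolding small_def by (metis minus_minus nat_0_le neg_0_le_iff_le)
next
  assume "small x" then show "fls_polypart x = 0"
    by (intro poly_eqI) (simp add: coeff_polypart small_def)
qed

lemma polypart_add: "fls_polypart (x + y) = fls_polypart x + fls_polypart y"
  by (intro poly_eqI) (simp add: coeff_polypart)

lemma polypart_diff: "fls_polypart (x - y) = fls_polypart x - fls_polypart y"
  by (intro poly_eqI) (simp add: coeff_polypart)

lemma polypart_poly_fls [simp]: "fls_polypart (poly_fls p) = p"
  by (intro poly_eqI) (simp add: coeff_polypart poly_fls_nth)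

lemma poly_fls_add: "poly_fls (p + q) = poly_fls p + poly_fls q"
  by (intro fls_eqI) (simp add: poly_fls_nth)

lemma poly_fls_diff: "poly_fls (p - q) = poly_fls p - poly_fls q"
  by (intro fls_eqI) (simp add: poly_fls_nth)

lemma poly_fls_smult: "poly_fls (smult a p) = fls_const a * poly_fls p"
  by (intro fls_eqI) (simp add: poly_fls_nth)

lemma poly_fls_mult: "poly_fls (p * q) = poly_fls p * poly_fls q"
  by (induction p) (simp_all add: poly_fls_pCons poly_fls_add poly_fls_smult algebra_simps)

lemma poly_fls_eq0_iff [simp]: "poly_fls p = 0 \<longleftrightarrow> p = 0"
proof
  assume "poly_fls p = 0"
  then have "coeff p n = 0" for n using poly_fls_nth[of p "- int n"] by simp
  then show "p = 0" by (intro poly_eqI) simp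
qed simp

lemma poly_fls_subdegree: "p \<noteq> 0 \<Longrightarrow> fls_subdegree (poly_fls p) = - int (degree p)"
  by (rule fls_subdegree_eqI) (auto simp: poly_fls_nth coeff_eq_0)

lemma small_add: "small x \<Longrightarrow> small y \<Longrightarrow> small (x + y)"
  and small_diff: "small x \<Longrightarrow> small y \<Longrightarrow> small (x - y)"
  and small_0: "small 0"
  unfolding small_def by auto

lemma small_subdegree: "small x \<Longrightarrow> x \<noteq> 0 \<Longrightarrow> fls_subdegree x \<ge> 1"
proof (rule ccontr)
  assume "small x" "x \<noteq> 0" "\<not> 1 \<le> fls_subdegree x"
  then show False unfolding small_def using nth_fls_subdegree_nonzero[of x] by auto
qed

lemma subdegree_small: "fls_subdegree x \<ge> 1 \<Longrightarrow> small x"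
  unfolding small_def by auto

lemma small_polypart_diff: "small (y - poly_fls (fls_polypart y))"
  using polypart_eq0_iff[of "y - poly_fls (fls_polypart y)"] by (simp add: polypart_diff)

lemma degree_polypart:
  assumes "fls_subdegree z \<le> 0" "z \<noteq> 0"
  shows "int (degree (fls_polypart z)) = - fls_subdegree z"
proof -
  let ?n = "nat (- fls_subdegree z)"
  have "coeff (fls_polypart z) ?n \<noteq> 0" using assms by (simp add: coeff_polypart)
  then have "?n \<le> degree (fls_polypart z)" by (rule le_degree)
  moreover have "degree (fls_polypart z) \<le> ?n"
    by (rule degree_le) (auto simp: coeff_polypart)
  ultimately show ?thesis using assms by simp
qed

definition rstep :: "'a::field fls \<Rightarrow> 'a fls option" where
  "rstep r = (let s = r - poly_fls (fls_polypart r) in if s = 0 then None else Some (inverse s))"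

lemma cf_rem_Suc: "cf_rem x (Suc n) = Option.bind (cf_rem x n) rstep"
  by (cases "cf_rem x n") (simp_all add: rstep_def)

lemma cf_rem_shift: "cf_rem x (Suc n) = Option.bind (rstep x) (\<lambda>y. cf_rem y n)"
proof (induction n)
  case 0 then show ?case by (cases "rstep x") (simp_all add: cf_rem_Suc, auto simp: rstep_def Let_def split: if_splits)
next
  case (Suc n)
  then show ?case by (cases "rstep x") (simp_all add: cf_rem_Suc[of x "Suc n"] cf_rem_Suc[of _ n])
qed

lemma cfq_Suc: "cfq x (Suc n) = (case rstep x of None \<Rightarrow> None | Some y \<Rightarrow> cfq y n)"
  unfolding cfq_def cf_rem_shift by (cases "rstep x") simp_all

lemma cfq_0: "cfq x 0 = Some (fls_polypart x)"
  unfolding cfq_def by simp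

lemma rstep_polypart: "rstep (y - poly_fls (fls_polypart y)) = rstep y"
  unfolding rstep_def by (simp add: polypart_diff Let_def)

lemma rstep_small: "small x \<Longrightarrow> rstep x = (if x = 0 then None else Some (inverse x))"
  unfolding rstep_def using polypart_eq0_iff[of x] by simp

lemma cfq_Suc_polypart: "cfq (y - poly_fls (fls_polypart y)) (Suc n) = cfq y (Suc n)"
  unfolding cfq_Suc rstep_polypart ..

definition cfs :: "'a::field fls \<Rightarrow> 'a poly list \<Rightarrow> bool" where
  "cfs x bs \<longleftrightarrow> (\<forall>i<length bs. cfq x (Suc i) = Some (bs ! i))"

lemma cfs_Nil [simp]: "cfs x []"
  unfolding cfs_def by simp

lemma cfs_Cons:
  assumes "small x"
  shows "cfs x (b # bs) \<longleftrightarrow> x \<noteq> 0 \<and> fls_polypart (inverse x) = b \<and> cfs (inverse x - poly_fls b) bs"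
proof (cases "x = 0")
  case True
  then have "cfq x (Suc 0) = None" using assms by (simp add: cfq_Suc rstep_small)
  then show ?thesis using True unfolding cfs_def by force
next
  case False
  then have q: "cfq x (Suc i) = cfq (inverse x) i" for i using assms by (simp add: cfq_Suc rstep_small)
  have "cfs x (b # bs) \<longleftrightarrow> cfq x (Suc 0) = Some b \<and> (\<forall>i<length bs. cfq x (Suc (Suc i)) = Some (bs ! i))"
    unfolding cfs_def by (auto simp: less_Suc_eq_0_disj)
  also have "\<dots> \<longleftrightarrow> fls_polypart (inverse x) = b \<and> (\<forall>i<length bs. cfq (inverse x) (Suc i) = Some (bs ! i))"
    by (simp add: q cfq_0)
  also have "\<dots> \<longleftrightarrow> fls_polypart (inverse x) = b \<and> cfs (inverse x - poly_fls b) bs"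
    unfolding cfs_def using cfq_Suc_polypart[of "inverse x"] by auto
  finally show ?thesis using False by simp
qed

lemma cfs_appendD: "cfs x (bs @ cs) \<Longrightarrow> cfs x bs"
  unfolding cfs_def by (auto simp: nth_append)

lemma cfs_snoc: "cfs x (bs @ [b]) \<longleftrightarrow> cfs x bs \<and> cfq x (Suc (length bs)) = Some b"
  unfolding cfs_def by (auto simp: nth_append less_Suc_eq)

definition sd :: "'a::zero poly list \<Rightarrow> nat" where
  "sd bs = sum_list (map degree bs)"

lemma sd_simps [simp]: "sd [] = 0" "sd (b # bs) = degree b + sd bs" "sd (bs @ cs) = sd bs + sd cs"
  unfolding sd_def by simp_all

lemma inv_small_degree:
  assumes "small x" "x \<noteq> 0"
  shows "int (degree (fls_polypart (inverse x))) = fls_subdegree x"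
  using degree_polypart[of "inverse x"] small_subdegree[OF assms] assms by simp

lemma cfs_degree: "small x \<Longrightarrow> cfs x bs \<Longrightarrow> \<forall>b\<in>set bs. degree b \<ge> 1"
proof (induction bs arbitrary: x)
  case (Cons b bs)
  then have x: "x \<noteq> 0" "fls_polypart (inverse x) = b" "cfs (inverse x - poly_fls b) bs"
    using cfs_Cons by blast+
  have "degree b \<ge> 1" using inv_small_degree[OF Cons(2) x(1)] x(2) small_subdegree[OF Cons(2) x(1)] by simp
  moreover have "small (inverse x - poly_fls b)" using small_polypart_diff[of "inverse x"] x(2) by simp
  ultimately show ?case using Cons.IH x(3) by simp
qed simp

lemma sum_small:
  assumes "degree b \<ge> 1" "small y"
  shows "poly_fls b + y \<noteq> 0" "fls_subdegree (poly_fls b + y) = - int (degree b)"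
proof -
  have b: "b \<noteq> 0" using assms by auto
  have "fls_subdegree (poly_fls b + y) = fls_subdegree (poly_fls b)"
  proof (cases "y = 0")
    case False
    then show ?thesis using fls_subdegree_add_eq1[of "poly_fls b" y] small_subdegree[OF assms(2)] b
      by (simp add: poly_fls_subdegree)
  qed simp
  then show s: "fls_subdegree (poly_fls b + y) = - int (degree b)" using b by (simp add: poly_fls_subdegree)
  show "poly_fls b + y \<noteq> 0"
  proof
    assume "poly_fls b + y = 0"
    then have "y = - poly_fls b" by (simp add: eq_neg_iff_add_eq_0 add.commute)
    then have "y $$ (- int (degree b)) \<noteq> 0" using b by (simp add: poly_fls_nth)
    then show False using assms(2) unfolding small_def by simp
  qed
qed

lemma cfv_props:
  assumes "\<forall>b\<in>set bs. degree b \<ge> 1"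
  shows "small (cfv bs) \<and> (bs \<noteq> [] \<longrightarrow> cfv bs \<noteq> 0 \<and> fls_subdegree (cfv bs) = int (degree (hd bs)))"
  using assms
proof (induction bs)
  case Nil then show ?case by (simp add: small_0)
next
  case (Cons b bs)
  then have "small (cfv bs)" "degree b \<ge> 1" by auto
  note s = sum_small[OF this(2,1)]
  have "fls_subdegree (cfv (b # bs)) = int (degree b)" using s by simp
  moreover have "cfv (b # bs) \<noteq> 0" using s by simp
  ultimately show ?case using \<open>degree b \<ge> 1\<close> by (auto intro: subdegree_small)
qed

lemma inv_diff: "(A::'a::field fls) \<noteq> 0 \<Longrightarrow> B \<noteq> 0 \<Longrightarrow> inverse A - inverse B = (B - A) / (A * B)"
  by (simp add: field_simps)

lemma approx:
  "small x \<Longrightarrow> cfs x (bs @ [b]) \<Longrightarrow>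
     x \<noteq> cfv bs \<and> fls_subdegree (x - cfv bs) = 2 * int (sd bs) + int (degree b)"
proof (induction bs arbitrary: x)
  case Nil
  then have "x \<noteq> 0" "fls_polypart (inverse x) = b" using cfs_Cons by auto
  then show ?case using inv_small_degree[OF Nil(1)] by auto
next
  case (Cons b' bs)
  then have x: "x \<noteq> 0" "fls_polypart (inverse x) = b'" "cfs (inverse x - poly_fls b') (bs @ [b])"
    using cfs_Cons[of x b' "bs @ [b]"] by auto
  define x' where "x' = inverse x - poly_fls b'"
  have sx': "small x'" using small_polypart_diff[of "inverse x"] x(2) by (simp add: x'_def)
  from Cons.IH[OF sx'] x(3) have IH: "x' \<noteq> cfv bs" "fls_subdegree (x' - cfv bs) = 2 * int (sd bs) + int (degree b)"
    by (auto simp: x'_def)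
  have db: "\<forall>c\<in>set (b' # bs @ [b]). degree c \<ge> 1" using cfs_degree[OF Cons(2,3)] by simp
  then have b1: "degree b' \<ge> 1" by simp
  have scfv: "small (cfv bs)" using cfv_props[of bs] db by simp
  define A where "A = poly_fls b' + x'"
  define B where "B = poly_fls b' + cfv bs"
  have A: "A \<noteq> 0" "fls_subdegree A = - int (degree b')" using sum_small[OF b1 sx'] by (auto simp: A_def)
  have B: "B \<noteq> 0" "fls_subdegree B = - int (degree b')" using sum_small[OF b1 scfv] by (auto simp: B_def)
  have xA: "x = inverse A" by (simp add: A_def x'_def)
  have cB: "cfv (b' # bs) = inverse B" by (simp add: B_def)
  have d: "x - cfv (b' # bs) = (cfv bs - x') / (A * B)"
    unfolding xA cB inv_diff[OF A(1) B(1)] by (simp add: A_def B_def)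
  have nz: "cfv bs - x' \<noteq> 0" using IH(1) by simp
  have "fls_subdegree (cfv bs - x') = 2 * int (sd bs) + int (degree b)"
    using IH(2) fls_subdegree_minus_sym by metis
  then have "fls_subdegree (x - cfv (b' # bs)) = 2 * int (sd (b' # bs)) + int (degree b)"
    unfolding d using A B nz by (simp add: fls_divide_subdegree)
  moreover have "x - cfv (b' # bs) \<noteq> 0" unfolding d using A B nz by simp
  ultimately show ?case by simp
qed

lemma legendre:
  "(\<forall>c\<in>set bs. degree c \<ge> 1) \<Longrightarrow> small x \<Longrightarrow>
     (x = cfv bs \<or> fls_subdegree (x - cfv bs) > 2 * int (sd bs)) \<Longrightarrow> cfs x bs"
proof (induction bs arbitrary: x)
  case Nil then show ?case by simp
next
  case (Cons b bs)
  have b1: "degree b \<ge> 1" and dbs: "\<forall>c\<in>set bs. degree c \<ge> 1" using Cons(2) by auto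
  have sy': "small (cfv bs)" using cfv_props[OF dbs] by simp
  define B where "B = poly_fls b + cfv bs"
  have B: "B \<noteq> 0" "fls_subdegree B = - int (degree b)" using sum_small[OF b1 sy'] by (auto simp: B_def)
  define y where "y = inverse B"
  have y: "y \<noteq> 0" "fls_subdegree y = int (degree b)" "cfv (b # bs) = y" using B by (auto simp: y_def B_def)
  have sdb: "int (sd (b # bs)) \<ge> int (degree b)" by simp
  have x: "x \<noteq> 0 \<and> fls_subdegree x = int (degree b)"
  proof (cases "x = y")
    case False
    then have lt: "fls_subdegree (x - y) > 2 * int (degree b)" using Cons(4) y(3) sdb by auto
    have "x = y + (x - y)" by simp
    then have "fls_subdegree x = fls_subdegree y"
      using fls_subdegree_add_eq1[of y "x - y"] y lt by simp
    moreover have "x \<noteq> 0"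
    proof
      assume "x = 0"
      then show False using lt y by (simp add: fls_subdegree_minus_sym[of 0 y, simplified])
    qed
    ultimately show ?thesis using y by simp
  qed (use y in simp)
  define x' where "x' = inverse x - poly_fls b"
  have d: "x' - cfv bs = (y - x) / (x * y)"
    using inv_diff[of x y] x y by (simp add: x'_def y_def B_def diff_diff_eq)
  have c: "x' = cfv bs \<or> fls_subdegree (x' - cfv bs) > 2 * int (sd bs)"
  proof (cases "x = y")
    case True then show ?thesis by (simp add: x'_def y_def B_def)
  next
    case False
    then have lt: "fls_subdegree (x - y) > 2 * int (sd (b # bs))" using Cons(4) y(3) by auto
    have "fls_subdegree (x' - cfv bs) = fls_subdegree (y - x) - fls_subdegree x - fls_subdegree y"
      unfolding d using False x y by (simp add: fls_divide_subdegree)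
    then show ?thesis using lt x y fls_subdegree_minus_sym[of x y] by simp
  qed
  have sx': "small x'"
  proof (cases "x' = cfv bs")
    case True then show ?thesis using sy' by simp
  next
    case False
    then have "small (x' - cfv bs)" using c by (intro subdegree_small) simp
    then have "small ((x' - cfv bs) + cfv bs)" using sy' by (rule small_add)
    then show ?thesis by simp
  qed
  have pp: "fls_polypart (inverse x) = b"
  proof -
    have "inverse x = poly_fls b + x'" by (simp add: x'_def)
    then show ?thesis using sx' polypart_eq0_iff[of x'] by (simp add: polypart_add)
  qed
  have "cfs x' bs" using Cons.IH[OF dbs sx' c] .
  then show ?case using cfs_Cons[OF Cons(3)] x pp by (simp add: x'_def)
qed

lemma cfs_exists:
  "small x \<Longrightarrow> cfs x bs \<Longrightarrow> x \<noteq> cfv bs \<Longrightarrow> \<exists>b. cfs x (bs @ [b])"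
proof (induction bs arbitrary: x)
  case Nil
  then show ?case using cfs_Cons[OF Nil(1), of "fls_polypart (inverse x)" "[]"] by auto
next
  case (Cons b' bs)
  then have x: "x \<noteq> 0" "fls_polypart (inverse x) = b'" "cfs (inverse x - poly_fls b') bs"
    using cfs_Cons by blast+
  define x' where "x' = inverse x - poly_fls b'"
  have sx': "small x'" using small_polypart_diff[of "inverse x"] x(2) by (simp add: x'_def)
  have "x' \<noteq> cfv bs"
  proof
    assume "x' = cfv bs"
    then have "inverse x = poly_fls b' + cfv bs" by (simp add: x'_def algebra_simps)
    then have "x = cfv (b' # bs)" by (metis cfv.simps(2) inverse_inverse_eq)
    then show False using Cons(4) by simp
  qed
  then obtain b where "cfs x' (bs @ [b])" using Cons.IH[OF sx'] x(3) by (auto simp: x'_def)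
  then show ?case using cfs_Cons[OF Cons(2)] x by (auto simp: x'_def)
qed

lemma approx_lt:
  assumes "small x" "cfs x bs"
  shows "x = cfv bs \<or> fls_subdegree (x - cfv bs) > 2 * int (sd bs)"
proof (cases "x = cfv bs")
  case False
  then obtain b where b: "cfs x (bs @ [b])" using cfs_exists assms by blast
  have "degree b \<ge> 1" using cfs_degree[OF assms(1) b] by simp
  then show ?thesis using approx[OF assms(1) b] by simp
qed simp

lemma cfs_cfv: "\<forall>c\<in>set bs. degree c \<ge> 1 \<Longrightarrow> cfs (cfv bs) bs"
  using legendre cfv_props by blast

lemma cfv_rat:
  assumes "\<forall>c\<in>set bs. degree c \<ge> 1"
  shows "\<exists>P Q. Q \<noteq> 0 \<and> degree Q = sd bs \<and> degree P \<le> degree Q \<and> cfv bs * poly_fls Q = poly_fls P"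
  using assms
proof (induction bs)
  case Nil
  show ?case by (rule exI[of _ 0], rule exI[of _ 1]) simp
next
  case (Cons b bs)
  then obtain P Q where PQ: "Q \<noteq> 0" "degree Q = sd bs" "degree P \<le> degree Q" "cfv bs * poly_fls Q = poly_fls P"
    by auto
  have b1: "degree b \<ge> 1" using Cons by simp
  have dbq: "degree (b * Q) = degree b + degree Q" using PQ b1 by (intro degree_mult_eq) auto
  have deg: "degree (b * Q + P) = degree b + degree Q"
    using degree_add_eq_left[of P "b * Q"] dbq PQ b1 by simp
  then have nz: "b * Q + P \<noteq> 0" using b1 by auto
  have e: "(poly_fls b + cfv bs) * poly_fls Q = poly_fls (b * Q + P)"
    using PQ(4) by (simp add: poly_fls_add poly_fls_mult algebra_simps)
  have nzQ: "poly_fls Q \<noteq> 0" using PQ by simp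
  have "cfv (b # bs) * poly_fls (b * Q + P) = poly_fls Q"
  proof -
    have "poly_fls b + cfv bs = poly_fls (b * Q + P) / poly_fls Q" using e nzQ by (simp add: field_simps)
    then show ?thesis using nz nzQ by simp
  qed
  then show ?case using deg PQ nz by (intro exI[of _ Q] exI[of _ "b * Q + P"]) auto
qed

lemma small_minus_cfv: "small a \<Longrightarrow> \<forall>c\<in>set bs. degree c \<ge> 1 \<Longrightarrow> small (a - cfv bs)"
  using cfv_props[of bs] small_diff by blast

lemma disj_mono:
  fixes x y x' y' :: "'a::field fls"
  assumes "x = y \<or> fls_subdegree (x - y) > m" "m \<ge> m'" "x' - y' = x - y"
  shows "x' = y' \<or> fls_subdegree (x' - y') > m'"
proof (cases "x = y")
  case True then have "x' - y' = 0" using assms(3) by simp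
  then show ?thesis by simp
next
  case False then show ?thesis using assms by simp
qed

definition INV :: "'a::field fls \<Rightarrow> 'a poly list \<Rightarrow> 'a poly list \<Rightarrow> bool" where
  "INV a bs cs \<longleftrightarrow> length bs = length cs \<and> (\<forall>c\<in>set bs. degree c \<ge> 1) \<and> (\<forall>c\<in>set cs. degree c \<ge> 1)
     \<and> cfs (a - cfv cs) bs \<and> cfs (a - cfv bs) cs
     \<and> 2 * int (sd cs) - 2 * int (sd bs) \<ge> 4 * int (length cs)
     \<and> (cs \<noteq> [] \<longrightarrow> 2 * int (sd cs) - 2 * int (sd bs) \<ge> int (degree (last cs)) + 1)"

lemma INV_Nil: "INV a [] []"
  unfolding INV_def by simp

lemma step1:
  assumes sa: "small a" and I: "INV a bs cs" and ne: "a \<noteq> cfv bs + cfv cs"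
  shows "\<exists>b. cfs (a - cfv cs) (bs @ [b]) \<and> cfs (a - cfv (bs @ [b])) cs \<and> degree b \<ge> 1
    \<and> int (degree b) \<ge> 2 * int (sd cs) - 2 * int (sd bs) + 1
    \<and> (cs \<noteq> [] \<longrightarrow> degree b \<ge> degree (last cs) + 2)"
proof -
  define D where "D = 2 * int (sd cs) - 2 * int (sd bs)"
  have db: "\<forall>c\<in>set bs. degree c \<ge> 1" and dc: "\<forall>c\<in>set cs. degree c \<ge> 1"
    and c1: "cfs (a - cfv cs) bs" and c2: "cfs (a - cfv bs) cs" and D0: "D \<ge> 0"
    and Dl: "cs \<noteq> [] \<longrightarrow> D \<ge> int (degree (last cs)) + 1"
    using I unfolding INV_def D_def by auto
  have s1: "small (a - cfv cs)" using small_minus_cfv[OF sa dc] .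
  have s2: "small (a - cfv bs)" using small_minus_cfv[OF sa db] .
  have n1: "a - cfv cs \<noteq> cfv bs" using ne by (auto simp: algebra_simps)
  have n2: "a - cfv bs \<noteq> cfv cs" using ne by (auto simp: algebra_simps)
  obtain b where b: "cfs (a - cfv cs) (bs @ [b])" using cfs_exists[OF s1 c1 n1] by blast
  obtain c' where c': "cfs (a - cfv bs) (cs @ [c'])" using cfs_exists[OF s2 c2 n2] by blast
  have b1: "degree b \<ge> 1" using cfs_degree[OF s1 b] by simp
  have c'1: "degree c' \<ge> 1" using cfs_degree[OF s2 c'] by simp
  have e1: "fls_subdegree (a - cfv cs - cfv bs) = 2 * int (sd bs) + int (degree b)"
    using approx[OF s1 b] by simp
  have e2: "fls_subdegree (a - cfv bs - cfv cs) = 2 * int (sd cs) + int (degree c')"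
    using approx[OF s2 c'] by simp
  have eq: "a - cfv cs - cfv bs = a - cfv bs - cfv cs" by (simp add: algebra_simps)
  have "2 * int (sd bs) + int (degree b) = 2 * int (sd cs) + int (degree c')" using e1[unfolded eq] e2 by simp
  then have degb: "int (degree b) = D + int (degree c')" unfolding D_def by linarith
  have dbb: "\<forall>c\<in>set (bs @ [b]). degree c \<ge> 1" using db b1 by simp
  have "cfs (a - cfv (bs @ [b])) cs"
  proof (rule legendre[OF dc small_minus_cfv[OF sa dbb]])
    have "a - cfv (bs @ [b]) - cfv cs = (a - cfv cs) - cfv (bs @ [b])" by (simp add: algebra_simps)
    moreover have "a - cfv cs = cfv (bs @ [b]) \<or> fls_subdegree (a - cfv cs - cfv (bs @ [b])) > 2 * int (sd (bs @ [b]))"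
      using approx_lt[OF s1 b] .
    moreover have "2 * int (sd (bs @ [b])) \<ge> 2 * int (sd cs)"
      using degb D0 c'1 unfolding D_def by simp
    ultimately show "a - cfv (bs @ [b]) = cfv cs \<or> fls_subdegree (a - cfv (bs @ [b]) - cfv cs) > 2 * int (sd cs)"
      using disj_mono by blast
  qed
  moreover have "cs \<noteq> [] \<longrightarrow> degree b \<ge> degree (last cs) + 2" using Dl degb c'1 by linarith
  moreover have "int (degree b) \<ge> 2 * int (sd cs) - 2 * int (sd bs) + 1" using degb c'1 unfolding D_def by linarith
  ultimately show ?thesis using b b1 by blast
qed

lemma step2:
  assumes sa: "small a" and I: "INV a bs cs"
    and b: "cfs (a - cfv cs) (bs @ [b])" and degb: "int (degree b) \<ge> 2 * int (sd cs) - 2 * int (sd bs) + 1"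
    and b3: "cfs (a - cfv (bs @ [b])) cs"
    and ne: "a \<noteq> cfv (bs @ [b]) + cfv cs"
  shows "\<exists>c. cfs (a - cfv (bs @ [b])) (cs @ [c]) \<and> cfs (a - cfv (cs @ [c])) (bs @ [b])
    \<and> degree c \<ge> degree b + 2 \<and> (cs = [] \<longrightarrow> degree c \<ge> 2 * degree b + 1)
    \<and> INV a (bs @ [b]) (cs @ [c])"
proof -
  define D where "D = 2 * int (sd cs) - 2 * int (sd bs)"
  have db: "\<forall>c\<in>set bs. degree c \<ge> 1" and dc: "\<forall>c\<in>set cs. degree c \<ge> 1"
    and c1: "cfs (a - cfv cs) bs" and c2: "cfs (a - cfv bs) cs" and D0: "D \<ge> 4 * int (length cs)"
    and len: "length bs = length cs"
    using I unfolding INV_def D_def by auto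
  have s1: "small (a - cfv cs)" using small_minus_cfv[OF sa dc] .
  have b1: "degree b \<ge> 1" using cfs_degree[OF s1 b] by simp
  have dbb: "\<forall>c\<in>set (bs @ [b]). degree c \<ge> 1" using db b1 by simp
  have s3: "small (a - cfv (bs @ [b]))" using small_minus_cfv[OF sa dbb] .
  have n1: "a - cfv cs \<noteq> cfv (bs @ [b])" using ne by (auto simp: algebra_simps)
  have n3: "a - cfv (bs @ [b]) \<noteq> cfv cs" using ne by (auto simp: algebra_simps)
  obtain b'' where b'': "cfs (a - cfv cs) ((bs @ [b]) @ [b''])" using cfs_exists[OF s1 b n1] by blast
  obtain c where c: "cfs (a - cfv (bs @ [b])) (cs @ [c])" using cfs_exists[OF s3 b3 n3] by blast
  have b''1: "degree b'' \<ge> 1" using cfs_degree[OF s1 b''] by simp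
  have c1': "degree c \<ge> 1" using cfs_degree[OF s3 c] by simp
  have e1: "fls_subdegree (a - cfv cs - cfv (bs @ [b])) = 2 * int (sd (bs @ [b])) + int (degree b'')"
    using approx[OF s1 b''] by simp
  have e2: "fls_subdegree (a - cfv (bs @ [b]) - cfv cs) = 2 * int (sd cs) + int (degree c)"
    using approx[OF s3 c] by simp
  have eq: "a - cfv cs - cfv (bs @ [b]) = a - cfv (bs @ [b]) - cfv cs" by (simp add: algebra_simps)
  have "2 * int (sd (bs @ [b])) + int (degree b'') = 2 * int (sd cs) + int (degree c)" using e1[unfolded eq] e2 by simp
  then have degc: "int (degree c) = 2 * int (degree b) - D + int (degree b'')" unfolding D_def by simp
  have dcc: "\<forall>x\<in>set (cs @ [c]). degree x \<ge> 1" using dc c1' by simp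
  have b4: "cfs (a - cfv (cs @ [c])) (bs @ [b])"
  proof (rule legendre[OF dbb small_minus_cfv[OF sa dcc]])
    have "a - cfv (cs @ [c]) - cfv (bs @ [b]) = (a - cfv (bs @ [b])) - cfv (cs @ [c])" by (simp add: algebra_simps)
    moreover have "a - cfv (bs @ [b]) = cfv (cs @ [c]) \<or> fls_subdegree (a - cfv (bs @ [b]) - cfv (cs @ [c])) > 2 * int (sd (cs @ [c]))"
      using approx_lt[OF s3 c] .
    moreover have "2 * int (sd (cs @ [c])) \<ge> 2 * int (sd (bs @ [b]))"
      using degc D0 degb b''1 unfolding D_def by simp
    ultimately show "a - cfv (cs @ [c]) = cfv (bs @ [b]) \<or> fls_subdegree (a - cfv (cs @ [c]) - cfv (bs @ [b])) > 2 * int (sd (bs @ [b]))"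
      using disj_mono by blast
  qed
  have "2 * int (sd (cs @ [c])) - 2 * int (sd (bs @ [b])) \<ge> 4 * int (length (cs @ [c]))"
    using degc D0 degb b''1 unfolding D_def by simp
  moreover have "2 * int (sd (cs @ [c])) - 2 * int (sd (bs @ [b])) \<ge> int (degree (last (cs @ [c]))) + 1"
    using degc D0 degb b''1 unfolding D_def by simp
  ultimately have "INV a (bs @ [b]) (cs @ [c])"
    unfolding INV_def using len dbb dcc b4 c by simp
  moreover have "degree c \<ge> degree b + 2" using degc degb b''1 by (simp add: D_def)
  moreover have "cs = [] \<longrightarrow> degree c \<ge> 2 * degree b + 1" using degc b''1 len by (auto simp: D_def)
  ultimately show ?thesis using c b4 by blast
qed

lemma rat_bound:
  assumes sa: "small a" and I: "INV a bs cs" and q: "q \<noteq> 0" and aq: "a = poly_fls p / poly_fls q"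
  shows "2 * length cs \<le> degree q"
proof (cases "cs = []")
  case False
  then obtain cs0 c where cs: "cs = cs0 @ [c]" by (metis rev_exhaust)
  have db: "\<forall>x\<in>set bs. degree x \<ge> 1" and dc: "\<forall>x\<in>set cs. degree x \<ge> 1"
    and c2: "cfs (a - cfv bs) cs" and D0: "2 * int (sd cs) - 2 * int (sd bs) \<ge> 4 * int (length cs)"
    using I unfolding INV_def by auto
  have s2: "small (a - cfv bs)" using small_minus_cfv[OF sa db] .
  define e where "e = a - cfv bs - cfv cs0"
  from approx[OF s2 c2[unfolded cs]]
  have e: "e \<noteq> 0" "fls_subdegree e = 2 * int (sd cs0) + int (degree c)" by (auto simp: e_def)
  obtain P Q where PQ: "Q \<noteq> 0" "degree Q = sd bs" "cfv bs * poly_fls Q = poly_fls P"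
    using cfv_rat[OF db] by blast
  obtain P' R where PR: "R \<noteq> 0" "degree R = sd cs0" "cfv cs0 * poly_fls R = poly_fls P'"
    using cfv_rat[of cs0] dc cs by auto
  have aq': "a * poly_fls q = poly_fls p" using aq q by simp
  define N where "N = p * Q * R - P * q * R - P' * q * Q"
  have "e * poly_fls (q * Q * R) = (a * poly_fls q) * poly_fls Q * poly_fls R
      - (cfv bs * poly_fls Q) * poly_fls q * poly_fls R - (cfv cs0 * poly_fls R) * poly_fls q * poly_fls Q"
    by (simp add: e_def poly_fls_mult algebra_simps)
  also have "\<dots> = poly_fls N"
    unfolding aq' PQ(3) PR(3) N_def by (simp add: poly_fls_mult poly_fls_diff)
  finally have eN: "e * poly_fls (q * Q * R) = poly_fls N" .
  have qQR: "q * Q * R \<noteq> 0" using q PQ PR by simp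
  have dqQR: "degree (q * Q * R) = degree q + sd bs + sd cs0"
    using q PQ PR by (simp add: degree_mult_eq)
  have "poly_fls N \<noteq> 0" using eN e qQR by (metis mult_eq_0_iff poly_fls_eq0_iff)
  then have Nnz: "N \<noteq> 0" by simp
  have "fls_subdegree (poly_fls N) = fls_subdegree e - int (degree (q * Q * R))"
    unfolding eN[symmetric] using e qQR by (simp add: poly_fls_subdegree)
  moreover have "fls_subdegree (poly_fls N) \<le> 0" using Nnz by (simp add: poly_fls_subdegree)
  ultimately have "2 * int (sd cs0) + int (degree c) \<le> int (degree q) + int (sd bs) + int (sd cs0)"
    using e dqQR by simp
  then show ?thesis using D0 cs by simp
qed simp

definition Bprop :: "'a::field fls \<Rightarrow> 'a poly list \<Rightarrow> 'a poly list \<Rightarrow> 'a poly \<Rightarrow> bool" where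
  "Bprop a bs cs b \<longleftrightarrow> cfs (a - cfv cs) (bs @ [b]) \<and> cfs (a - cfv (bs @ [b])) cs \<and> degree b \<ge> 1
    \<and> int (degree b) \<ge> 2 * int (sd cs) - 2 * int (sd bs) + 1
    \<and> (cs \<noteq> [] \<longrightarrow> degree b \<ge> degree (last cs) + 2)"

definition Cprop :: "'a::field fls \<Rightarrow> 'a poly list \<Rightarrow> 'a poly list \<Rightarrow> 'a poly \<Rightarrow> 'a poly \<Rightarrow> bool" where
  "Cprop a bs cs b c \<longleftrightarrow> cfs (a - cfv (bs @ [b])) (cs @ [c]) \<and> cfs (a - cfv (cs @ [c])) (bs @ [b])
    \<and> degree c \<ge> degree b + 2 \<and> (cs = [] \<longrightarrow> degree c \<ge> 2 * degree b + 1)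
    \<and> INV a (bs @ [b]) (cs @ [c])"

lemma sstep_Run:
  assumes sa: "small a" and I: "INV a bs cs"
  shows "(a = cfv bs + cfv cs \<and> sstep a (Run bs cs) = Stop bs cs) \<or>
    (\<exists>b. a \<noteq> cfv bs + cfv cs \<and> Bprop a bs cs b \<and> a = cfv (bs @ [b]) + cfv cs
         \<and> sstep a (Run bs cs) = Stop (bs @ [b]) cs) \<or>
    (\<exists>b c. a \<noteq> cfv bs + cfv cs \<and> Bprop a bs cs b \<and> a \<noteq> cfv (bs @ [b]) + cfv cs
         \<and> Cprop a bs cs b c \<and> sstep a (Run bs cs) = Run (bs @ [b]) (cs @ [c]))"
proof (cases "a = cfv bs + cfv cs")
  case True then show ?thesis by simp
next
  case ne: False
  obtain b where B: "Bprop a bs cs b" using step1[OF sa I ne] unfolding Bprop_def by blast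
  have len: "length cs = length bs" using I unfolding INV_def by simp
  have qb: "cfq (a - cfv cs) (Suc (length bs)) = Some b" using B unfolding Bprop_def cfs_snoc by simp
  show ?thesis
  proof (cases "a = cfv (bs @ [b]) + cfv cs")
    case True then show ?thesis using ne B qb by simp
  next
    case ne2: False
    from B have b: "cfs (a - cfv cs) (bs @ [b])" and degb: "int (degree b) \<ge> 2 * int (sd cs) - 2 * int (sd bs) + 1"
      and b3: "cfs (a - cfv (bs @ [b])) cs" unfolding Bprop_def by auto
    obtain c where C: "Cprop a bs cs b c" using step2[OF sa I b degb b3 ne2] unfolding Cprop_def by blast
    have qc: "cfq (a - cfv (bs @ [b])) (Suc (length bs)) = Some c"
      using C len unfolding Cprop_def cfs_snoc by simp
    show ?thesis using ne ne2 B C qb qc by simp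
  qed
qed

lemma sh_state_0: "sh_state a 0 = Run [] []"
  unfolding sh_state_def by simp

lemma sh_state_Suc: "sh_state a (Suc k) = sstep a (sh_state a k)"
  unfolding sh_state_def by simp

definition SINV :: "'a::field fls \<Rightarrow> nat \<Rightarrow> 'a poly sstate \<Rightarrow> bool" where
  "SINV a k st \<longleftrightarrow> (\<exists>bs cs. st = Run bs cs \<and> length bs = k \<and> INV a bs cs) \<or>
     (\<exists>bs cs. st = Stop bs cs \<and> a = cfv bs + cfv cs \<and> length bs \<le> k \<and> length cs \<le> length bs
        \<and> (\<forall>x\<in>set bs. degree x \<ge> 1) \<and> (\<forall>x\<in>set cs. degree x \<ge> 1))"

lemma states: "small a \<Longrightarrow> SINV a k (sh_state a k)"
proof (induction k)
  case 0 then show ?case unfolding SINV_def by (simp add: sh_state_0 INV_Nil)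
next
  case (Suc k)
  have H: "(\<exists>bs cs. sh_state a k = Run bs cs \<and> length bs = k \<and> INV a bs cs) \<or>
     (\<exists>bs cs. sh_state a k = Stop bs cs \<and> a = cfv bs + cfv cs \<and> length bs \<le> k \<and> length cs \<le> length bs
        \<and> (\<forall>x\<in>set bs. degree x \<ge> 1) \<and> (\<forall>x\<in>set cs. degree x \<ge> 1))"
    using Suc.IH[OF Suc.prems] unfolding SINV_def .
  from H show ?case
  proof (elim disjE exE conjE)
    fix bs cs assume st: "sh_state a k = Run bs cs" and len: "length bs = k" and I: "INV a bs cs"
    have len2: "length cs = length bs" and db: "\<forall>x\<in>set bs. degree x \<ge> 1" and dc: "\<forall>x\<in>set cs. degree x \<ge> 1"
      using I unfolding INV_def by auto
    from sstep_Run[OF Suc.prems I] show ?thesis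
    proof (elim disjE exE conjE)
      assume "a = cfv bs + cfv cs" "sstep a (Run bs cs) = Stop bs cs"
      then show ?thesis using st len len2 db dc by (simp add: sh_state_Suc SINV_def)
    next
      fix b assume "Bprop a bs cs b" "a = cfv (bs @ [b]) + cfv cs" "sstep a (Run bs cs) = Stop (bs @ [b]) cs"
      then show ?thesis using st len len2 db dc by (simp add: sh_state_Suc Bprop_def SINV_def)
    next
      fix b c assume "Cprop a bs cs b c" "sstep a (Run bs cs) = Run (bs @ [b]) (cs @ [c])"
      then show ?thesis using st len by (simp add: sh_state_Suc Cprop_def SINV_def)
    qed
  next
    fix bs cs assume "sh_state a k = Stop bs cs" "a = cfv bs + cfv cs" "length bs \<le> k" "length cs \<le> length bs"
      "\<forall>x\<in>set bs. degree x \<ge> 1" "\<forall>x\<in>set cs. degree x \<ge> 1"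
    then show ?thesis by (simp add: sh_state_Suc SINV_def)
  qed
qed

lemma no_fail: "small a \<Longrightarrow> sh_state a k \<noteq> Fail"
  using states[of a k] unfolding SINV_def by auto

lemma len_le: "small a \<Longrightarrow> length (st_bs (sh_state a k)) \<le> k \<and> length (st_cs (sh_state a k)) \<le> length (st_bs (sh_state a k))"
  using states[of a k] unfolding SINV_def INV_def by auto

lemma stop_persist:
  assumes st: "sh_state a j = Stop bs cs" and jk: "j \<le> k"
  shows "sh_state a k = Stop bs cs"
  using jk by (induction k rule: dec_induct) (simp_all add: st sh_state_Suc)

lemma step_ext:
  assumes sa: "small a"
  shows "\<exists>ys zs. st_bs (sh_state a (Suc k)) = st_bs (sh_state a k) @ ys \<and> st_cs (sh_state a (Suc k)) = st_cs (sh_state a k) @ zs"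
proof -
  have "SINV a k (sh_state a k)" using states[OF sa] .
  then show ?thesis unfolding SINV_def
  proof (elim disjE exE conjE)
    fix bs cs assume st: "sh_state a k = Run bs cs" and I: "INV a bs cs"
    have stS: "sh_state a (Suc k) = sstep a (Run bs cs)" by (simp add: sh_state_Suc st)
    from sstep_Run[OF sa I] show ?thesis
    proof (elim disjE exE conjE)
      assume e: "sstep a (Run bs cs) = Stop bs cs"
      show ?thesis unfolding stS e st by simp
    next
      fix b assume e: "sstep a (Run bs cs) = Stop (bs @ [b]) cs"
      show ?thesis unfolding stS e st by simp
    next
      fix b c assume e: "sstep a (Run bs cs) = Run (bs @ [b]) (cs @ [c])"
      show ?thesis unfolding stS e st by simp
    qed
  next
    fix bs cs assume st: "sh_state a k = Stop bs cs"
    then show ?thesis by (simp add: sh_state_Suc)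
  qed
qed

lemma prefix_ext:
  assumes sa: "small a" and jk: "j \<le> k"
  shows "\<exists>ys zs. st_bs (sh_state a k) = st_bs (sh_state a j) @ ys \<and> st_cs (sh_state a k) = st_cs (sh_state a j) @ zs"
  using jk
proof (induction k rule: dec_induct)
  case base then show ?case by simp
next
  case (step k)
  then show ?case using step_ext[OF sa, of k] by force
qed

lemma sh_b_eq:
  assumes sa: "small a" and N: "1 \<le> N" "N \<le> length (st_bs (sh_state a k))"
  shows "sh_b a N = st_bs (sh_state a k) ! (N - 1)"
proof -
  define k0 where "k0 = (LEAST k. N \<le> length (st_bs (sh_state a k)))"
  have k0: "N \<le> length (st_bs (sh_state a k0))" "k0 \<le> k"
    using LeastI[of "\<lambda>k. N \<le> length (st_bs (sh_state a k))" k] Least_le[of "\<lambda>k. N \<le> length (st_bs (sh_state a k))" k] N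
    by (auto simp: k0_def)
  obtain ys where "st_bs (sh_state a k) = st_bs (sh_state a k0) @ ys" using prefix_ext[OF sa k0(2)] by blast
  moreover have lt: "N - 1 < length (st_bs (sh_state a k0))" using k0 N by linarith
  ultimately show ?thesis unfolding sh_b_def k0_def[symmetric] by (simp add: nth_append)
qed

lemma sh_c_eq:
  assumes sa: "small a" and N: "1 \<le> N" "N \<le> length (st_cs (sh_state a k))"
  shows "sh_c a N = st_cs (sh_state a k) ! (N - 1)"
proof -
  define k0 where "k0 = (LEAST k. N \<le> length (st_cs (sh_state a k)))"
  have k0: "N \<le> length (st_cs (sh_state a k0))" "k0 \<le> k"
    using LeastI[of "\<lambda>k. N \<le> length (st_cs (sh_state a k))" k] Least_le[of "\<lambda>k. N \<le> length (st_cs (sh_state a k))" k] N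
    by (auto simp: k0_def)
  obtain ys where "st_cs (sh_state a k) = st_cs (sh_state a k0) @ ys" using prefix_ext[OF sa k0(2)] by blast
  moreover have lt: "N - 1 < length (st_cs (sh_state a k0))" using k0 N by linarith
  ultimately show ?thesis unfolding sh_c_def k0_def[symmetric] by (simp add: nth_append)
qed

lemma sh_bcf_eq:
  assumes sa: "small a" and "length (st_bs (sh_state a k)) = N"
  shows "sh_bcf a N = cfv (st_bs (sh_state a k))"
proof -
  have "map (sh_b a) [1..<Suc N] = st_bs (sh_state a k)"
  proof (rule nth_equalityI)
    show "length (map (sh_b a) [1..<Suc N]) = length (st_bs (sh_state a k))" using assms by simp
    fix i assume i: "i < length (map (sh_b a) [1..<Suc N])"
    then have "map (sh_b a) [1..<Suc N] ! i = sh_b a (Suc i)" by (simp del: upt_Suc)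
    also have "\<dots> = st_bs (sh_state a k) ! i"
    proof -
      have iN: "i < N" using i by (simp del: upt_Suc)
      then show ?thesis using sh_b_eq[OF sa, of "Suc i" k] assms by simp
    qed
    finally show "map (sh_b a) [1..<Suc N] ! i = st_bs (sh_state a k) ! i" .
  qed
  then show ?thesis unfolding sh_bcf_def by simp
qed

lemma sh_ccf_eq:
  assumes sa: "small a" and "length (st_cs (sh_state a k)) = N"
  shows "sh_ccf a N = cfv (st_cs (sh_state a k))"
proof -
  have "map (sh_c a) [1..<Suc N] = st_cs (sh_state a k)"
  proof (rule nth_equalityI)
    show "length (map (sh_c a) [1..<Suc N]) = length (st_cs (sh_state a k))" using assms by simp
    fix i assume i: "i < length (map (sh_c a) [1..<Suc N])"
    then have "map (sh_c a) [1..<Suc N] ! i = sh_c a (Suc i)" by (simp del: upt_Suc)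
    also have "\<dots> = st_cs (sh_state a k) ! i"
    proof -
      have iN: "i < N" using i by (simp del: upt_Suc)
      then show ?thesis using sh_c_eq[OF sa, of "Suc i" k] assms by simp
    qed
    finally show "map (sh_c a) [1..<Suc N] ! i = st_cs (sh_state a k) ! i" .
  qed
  then show ?thesis unfolding sh_ccf_def by simp
qed

lemma b_at:
  assumes sa: "small a" and N: "1 \<le> N" and bd: "b_defined a N"
  shows "\<exists>bs cs b. sh_state a (N - 1) = Run bs cs \<and> length bs = N - 1 \<and> INV a bs cs \<and> Bprop a bs cs b
     \<and> (sh_state a N = Stop (bs @ [b]) cs \<or> (\<exists>c. Cprop a bs cs b c \<and> sh_state a N = Run (bs @ [b]) (cs @ [c])))"
proof -
  obtain k where k: "N \<le> length (st_bs (sh_state a k))" using bd unfolding b_defined_def by blast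
  have SucN: "Suc (N - 1) = N" using N by simp
  have nostop: False if st: "sh_state a j = Stop bs cs" and lb: "length bs < N" and j: "j \<le> N" for j bs cs
  proof (cases "k < j")
    case True
    then have "length (st_bs (sh_state a k)) \<le> k" using len_le[OF sa] by blast
    then show False using k True j by simp
  next
    case False
    then have "sh_state a k = Stop bs cs" using stop_persist[OF st] by simp
    then show False using k lb by simp
  qed
  have "SINV a (N - 1) (sh_state a (N - 1))" using states[OF sa] .
  then show ?thesis unfolding SINV_def
  proof (elim disjE exE conjE)
    fix bs cs assume st: "sh_state a (N - 1) = Stop bs cs" "length bs \<le> N - 1"
    have "length bs < N" using st N by linarith
    then show ?thesis using nostop[OF st(1)] by simp
  next
    fix bs cs assume st: "sh_state a (N - 1) = Run bs cs" and len: "length bs = N - 1" and I: "INV a bs cs"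
    have stN: "sh_state a N = sstep a (Run bs cs)" using st sh_state_Suc[of a "N - 1"] SucN by simp
    from sstep_Run[OF sa I] show ?thesis
    proof (elim disjE exE conjE)
      assume "sstep a (Run bs cs) = Stop bs cs"
      then show ?thesis using nostop[of N bs cs] stN len N by simp
    next
      fix b assume "Bprop a bs cs b" "sstep a (Run bs cs) = Stop (bs @ [b]) cs"
      then show ?thesis using st len I stN by (intro exI[of _ bs] exI[of _ cs] exI[of _ b]) simp
    next
      fix b c assume "Bprop a bs cs b" "Cprop a bs cs b c" "sstep a (Run bs cs) = Run (bs @ [b]) (cs @ [c])"
      then show ?thesis using st len I stN by (intro exI[of _ bs] exI[of _ cs] exI[of _ b]) auto
    qed
  qed
qed

lemma c_at:
  assumes sa: "small a" and N: "1 \<le> N" and cd: "c_defined a N"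
  shows "\<exists>bs cs b c. sh_state a (N - 1) = Run bs cs \<and> length bs = N - 1 \<and> INV a bs cs \<and> Bprop a bs cs b
     \<and> Cprop a bs cs b c \<and> sh_state a N = Run (bs @ [b]) (cs @ [c])"
proof -
  obtain k where k: "N \<le> length (st_cs (sh_state a k))" using cd unfolding c_defined_def by blast
  then have "b_defined a N" unfolding b_defined_def using len_le[OF sa, of k] by (meson le_trans)
  from b_at[OF sa N this] obtain bs cs b where H: "sh_state a (N - 1) = Run bs cs" "length bs = N - 1" "INV a bs cs"
    "Bprop a bs cs b" "sh_state a N = Stop (bs @ [b]) cs \<or> (\<exists>c. Cprop a bs cs b c \<and> sh_state a N = Run (bs @ [b]) (cs @ [c]))"
    by blast
  have lc: "length cs = N - 1" using H(2,3) unfolding INV_def by simp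
  have "\<not> sh_state a N = Stop (bs @ [b]) cs"
  proof
    assume st: "sh_state a N = Stop (bs @ [b]) cs"
    show False
    proof (cases "k < N")
      case True
      then show False using k len_le[OF sa, of k] by simp
    next
      case False
      then have "sh_state a k = Stop (bs @ [b]) cs" using stop_persist[OF st] by simp
      then show False using k lc N by simp
    qed
  qed
  then show ?thesis using H by blast
qed

definition close :: "nat \<Rightarrow> 'a::field fls \<Rightarrow> 'a fls \<Rightarrow> bool" where
  "close n x y \<longleftrightarrow> (\<forall>k\<le>int n. x $$ k = y $$ k)"

lemma close_sub: "x = y \<or> fls_subdegree (x - y) > int n \<Longrightarrow> close n x y"
proof (elim disjE)
  assume a: "fls_subdegree (x - y) > int n"
  have "x $$ k = y $$ k" if "k \<le> int n" for k
  proof -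
    have "(x - y) $$ k = 0" using that a by (intro fls_eq0_below_subdegree) simp
    then show ?thesis by simp
  qed
  then show ?thesis unfolding close_def by simp
qed (simp add: close_def)

lemma close_trans: "close n x y \<Longrightarrow> close n y z \<Longrightarrow> close n x z"
  and close_refl: "close n x x"
  and close_add: "close n x y \<Longrightarrow> close n z w \<Longrightarrow> close n (x + z) (y + w)"
  unfolding close_def by auto

lemma dist_close:
  assumes "close n x y"
  shows "dist x y \<le> (1/2) ^ n"
proof (cases "x = y")
  case False
  define s where "s = fls_subdegree (x - y)"
  have nz: "(x - y) $$ s \<noteq> 0" unfolding s_def using False by (intro nth_fls_subdegree_nonzero) simp
  have "s > int n"
  proof (rule ccontr)
    assume "\<not> s > int n"
    then have "x $$ s = y $$ s" using assms unfolding close_def by simp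
    then show False using nz by simp
  qed
  then have "dist x y = inverse (2 ^ nat s)" using False unfolding dist_fls_def s_def by simp
  also have "\<dots> \<le> inverse (2 ^ n)"
    using \<open>s > int n\<close> by (intro le_imp_inverse_le) (auto intro: power_increasing)
  finally show ?thesis by (simp add: power_one_over inverse_eq_divide)
qed simp

lemma tendsto_close:
  assumes "\<And>n m. n \<le> m \<Longrightarrow> close n (f m) L"
  shows "f \<longlonglongrightarrow> L"
proof (rule metric_LIMSEQ_I)
  fix r :: real assume "0 < r"
  then obtain no where no: "(1/2) ^ no < r" using real_arch_pow_inv[of r "1/2"] by auto
  have "dist (f m) L < r" if "m \<ge> no" for m
    using dist_close[OF assms[OF that]] no by linarith
  then show "\<exists>no. \<forall>n\<ge>no. dist (f n) L < r" by blast
qed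

lemma conv_construct:
  assumes c: "\<And>n m. n \<le> m \<Longrightarrow> close n (f m) (f n)"
  shows "\<exists>L. \<forall>n. close n (f n) L"
proof -
  define L where "L = f 0 + fps_to_fls (Abs_fps (\<lambda>i. (f i - f 0) $$ int i))"
  have "close n (f n) L" for n
    unfolding close_def
  proof (intro allI impI)
    fix k assume k: "k \<le> int n"
    show "f n $$ k = L $$ k"
    proof (cases "k < 0")
      case True
      have "close 0 (f n) (f 0)" using c[of 0 n] by simp
      then have "f n $$ k = f 0 $$ k" using True unfolding close_def by simp
      then show ?thesis using True by (simp add: L_def)
    next
      case False
      have "close (nat k) (f n) (f (nat k))" using c[of "nat k" n] k by simp
      then have "f n $$ k = f (nat k) $$ k" using False unfolding close_def by simp
      then show ?thesis using False by (simp add: L_def)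
    qed
  qed
  then show ?thesis by blast
qed

lemma sd_ge_len: "\<forall>x\<in>set bs. degree x \<ge> 1 \<Longrightarrow> sd bs \<ge> length bs"
  by (induction bs) auto

lemma nonstop:
  assumes sa: "small a" and ns: "\<not> sh_stops a"
  shows "(\<forall>n. b_defined a n \<and> c_defined a n) \<and> convergent (sh_bcf a) \<and> convergent (sh_ccf a)
    \<and> a = lim (sh_bcf a) + lim (sh_ccf a)"
proof -
  define BS where "BS k = st_bs (sh_state a k)" for k
  define CS where "CS k = st_cs (sh_state a k)" for k
  have run: "sh_state a k = Run (BS k) (CS k) \<and> length (BS k) = k \<and> INV a (BS k) (CS k)" for k
  proof -
    have "SINV a k (sh_state a k)" using states[OF sa] .
    moreover have "sh_state a k \<noteq> Stop bs cs" for bs cs using ns unfolding sh_stops_def by blast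
    ultimately show ?thesis unfolding SINV_def BS_def CS_def by auto
  qed
  have lenC: "length (CS k) = k" for k using run[of k] unfolding INV_def by simp
  have db: "\<forall>x\<in>set (BS k). degree x \<ge> 1" and dc: "\<forall>x\<in>set (CS k). degree x \<ge> 1" for k
    using run[of k] unfolding INV_def by auto
  have bcf: "sh_bcf a = (\<lambda>k. cfv (BS k))"
    using sh_bcf_eq[OF sa] run unfolding BS_def by (intro ext) simp
  have ccf: "sh_ccf a = (\<lambda>k. cfv (CS k))"
    using sh_ccf_eq[OF sa] lenC unfolding CS_def by (intro ext) simp
  have cB: "close n (cfv (BS m)) (cfv (BS n))" if nm: "n \<le> m" for n m
  proof -
    obtain ys where ys: "BS m = BS n @ ys" using prefix_ext[OF sa nm] unfolding BS_def by blast
    have "cfs (cfv (BS m)) (BS m)" using cfs_cfv[OF db] .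
    then have "cfs (cfv (BS m)) (BS n)" using ys cfs_appendD by metis
    from approx_lt[OF _ this] cfv_props[OF db[of m]] sd_ge_len[OF db[of n]] run[of n]
    show ?thesis by (intro close_sub) auto
  qed
  have cC: "close n (cfv (CS m)) (cfv (CS n))" if nm: "n \<le> m" for n m
  proof -
    obtain ys where ys: "CS m = CS n @ ys" using prefix_ext[OF sa nm] unfolding CS_def by blast
    have "cfs (cfv (CS m)) (CS m)" using cfs_cfv[OF dc] .
    then have "cfs (cfv (CS m)) (CS n)" using ys cfs_appendD by metis
    from approx_lt[OF _ this] cfv_props[OF dc[of m]] sd_ge_len[OF dc[of n]] lenC[of n]
    show ?thesis by (intro close_sub) auto
  qed
  have cA: "close n a (cfv (BS n) + cfv (CS n))" for n
  proof -
    have "cfs (a - cfv (CS n)) (BS n)" using run[of n] unfolding INV_def by simp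
    from approx_lt[OF small_minus_cfv[OF sa dc] this] sd_ge_len[OF db[of n]] run[of n]
    have "close n (a - cfv (CS n)) (cfv (BS n))" by (intro close_sub) auto
    from close_add[OF this close_refl[of n "cfv (CS n)"]] show ?thesis by simp
  qed
  obtain LB where LB: "\<forall>n. close n (cfv (BS n)) LB" using conv_construct[of "\<lambda>k. cfv (BS k)"] cB by blast
  obtain LC where LC: "\<forall>n. close n (cfv (CS n)) LC" using conv_construct[of "\<lambda>k. cfv (CS k)"] cC by blast
  have tB: "(\<lambda>k. cfv (BS k)) \<longlonglongrightarrow> LB"
    by (rule tendsto_close) (use cB LB close_trans in blast)
  have tC: "(\<lambda>k. cfv (CS k)) \<longlonglongrightarrow> LC"
    by (rule tendsto_close) (use cC LC close_trans in blast)
  have "a = LB + LC"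
  proof (rule fls_eqI)
    fix k
    have "close (nat k) a (LB + LC)"
      using close_trans[OF cA close_add[OF LB[rule_format] LC[rule_format]]] .
    then show "a $$ k = (LB + LC) $$ k" unfolding close_def by simp
  qed
  moreover have "b_defined a n \<and> c_defined a n" for n
    unfolding b_defined_def c_defined_def using run[of n] lenC[of n] unfolding BS_def CS_def
    by (metis le_refl st_bs.simps(1) st_cs.simps(1))
  ultimately show ?thesis using tB tC limI unfolding bcf ccf convergent_def by metis
qed

lemma st_lens:
  assumes "sh_state a (N - 1) = Run bs cs" "length bs = N - 1" "INV a bs cs"
  shows "length cs = N - 1"
  using assms unfolding INV_def by simp

lemma claim_b:
  assumes sa: "small a" and n: "1 \<le> n" and bd: "b_defined a n"
  shows "(\<forall>i. 1 \<le> i \<and> i \<le> n - 1 \<longrightarrow> cfq (a - sh_bcf a n) i = Some (sh_c a i))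
    \<and> (2 \<le> n \<longrightarrow> degree (sh_b a n) \<ge> degree (sh_c a (n - 1)) + 2)"
proof -
  obtain bs cs b where H: "sh_state a (n - 1) = Run bs cs" "length bs = n - 1" "INV a bs cs" "Bprop a bs cs b"
     "sh_state a n = Stop (bs @ [b]) cs \<or> (\<exists>c. Cprop a bs cs b c \<and> sh_state a n = Run (bs @ [b]) (cs @ [c]))"
    using b_at[OF sa n bd] by (elim exE conjE) (rule that; assumption)
  have lc: "length cs = n - 1" using st_lens[OF H(1-3)] .
  have stb: "st_bs (sh_state a n) = bs @ [b]" using H(5) by auto
  have lb: "length (bs @ [b]) = n" using H(2) n by simp
  have bcf: "sh_bcf a n = cfv (bs @ [b])" using sh_bcf_eq[OF sa, of n n] stb lb by simp
  have shb: "sh_b a n = b" using sh_b_eq[OF sa n, of n] stb lb H(2) by (simp add: nth_append)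
  have shc: "sh_c a i = cs ! (i - 1)" if "1 \<le> i" "i \<le> n - 1" for i
    using sh_c_eq[OF sa that(1), of "n - 1"] H(1) lc that by simp
  have cf: "cfs (a - cfv (bs @ [b])) cs" and dg: "cs \<noteq> [] \<longrightarrow> degree b \<ge> degree (last cs) + 2"
    using H(4) unfolding Bprop_def by auto
  have "cfq (a - sh_bcf a n) i = Some (sh_c a i)" if "1 \<le> i" "i \<le> n - 1" for i
  proof -
    have lt: "i - 1 < length cs" using lc that by simp
    have "cfq (a - cfv (bs @ [b])) (Suc (i - 1)) = Some (cs ! (i - 1))"
      using cf lt unfolding cfs_def by blast
    moreover have "Suc (i - 1) = i" using that by simp
    ultimately show ?thesis using that shc bcf by simp
  qed
  moreover have "degree (sh_b a n) \<ge> degree (sh_c a (n - 1)) + 2" if "2 \<le> n"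
  proof -
    have "cs \<noteq> []" using lc that by auto
    moreover have "last cs = cs ! (n - 2)" using lc that \<open>cs \<noteq> []\<close> by (simp add: last_conv_nth numeral_2_eq_2)
    moreover have "sh_c a (n - 1) = cs ! (n - 2)" using shc[of "n - 1"] that by (simp add: numeral_2_eq_2)
    ultimately show ?thesis using dg shb by simp
  qed
  ultimately show ?thesis by blast
qed

lemma claim_c:
  assumes sa: "small a" and n: "1 \<le> n" and cd: "c_defined a n"
  shows "(\<forall>i. 1 \<le> i \<and> i \<le> n \<longrightarrow> cfq (a - sh_ccf a n) i = Some (sh_b a i)
                                \<and> cfq (a - sh_bcf a n) i = Some (sh_c a i))
    \<and> (n = 1 \<longrightarrow> degree (sh_c a 1) \<ge> 2 * degree (sh_b a 1) + 1)
    \<and> (2 \<le> n \<longrightarrow> degree (sh_c a n) \<ge> degree (sh_b a n) + 2)"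
proof -
  obtain bs cs b c where H: "sh_state a (n - 1) = Run bs cs" "length bs = n - 1" "INV a bs cs" "Bprop a bs cs b"
     "Cprop a bs cs b c" "sh_state a n = Run (bs @ [b]) (cs @ [c])"
    using c_at[OF sa n cd] by (elim exE conjE) (rule that; assumption)
  have lc: "length cs = n - 1" using st_lens[OF H(1-3)] .
  have lb: "length (bs @ [b]) = n" "length (cs @ [c]) = n" using H(2) lc n by auto
  have bcf: "sh_bcf a n = cfv (bs @ [b])" using sh_bcf_eq[OF sa, of n n] H(6) lb by simp
  have ccf: "sh_ccf a n = cfv (cs @ [c])" using sh_ccf_eq[OF sa, of n n] H(6) lb by simp
  have shb: "sh_b a i = (bs @ [b]) ! (i - 1)" if "1 \<le> i" "i \<le> n" for i
    using sh_b_eq[OF sa that(1), of n] H(6) lb that by simp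
  have shc: "sh_c a i = (cs @ [c]) ! (i - 1)" if "1 \<le> i" "i \<le> n" for i
    using sh_c_eq[OF sa that(1), of n] H(6) lb that by simp
  have cf1: "cfs (a - cfv (bs @ [b])) (cs @ [c])" and cf2: "cfs (a - cfv (cs @ [c])) (bs @ [b])"
    and d1: "degree c \<ge> degree b + 2" and d2: "cs = [] \<longrightarrow> degree c \<ge> 2 * degree b + 1"
    using H(5) unfolding Cprop_def by auto
  have "cfq (a - sh_ccf a n) i = Some (sh_b a i) \<and> cfq (a - sh_bcf a n) i = Some (sh_c a i)"
    if "1 \<le> i" "i \<le> n" for i
  proof -
    have lt: "i - 1 < length (cs @ [c])" "i - 1 < length (bs @ [b])" using lb that by auto
    have "cfq (a - cfv (bs @ [b])) (Suc (i - 1)) = Some ((cs @ [c]) ! (i - 1))"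
      using cf1 lt(1) unfolding cfs_def by blast
    moreover have "cfq (a - cfv (cs @ [c])) (Suc (i - 1)) = Some ((bs @ [b]) ! (i - 1))"
      using cf2 lt(2) unfolding cfs_def by blast
    moreover have "Suc (i - 1) = i" using that by simp
    ultimately show ?thesis using that shb shc bcf ccf by simp
  qed
  moreover have "degree (sh_c a 1) \<ge> 2 * degree (sh_b a 1) + 1" if "n = 1"
  proof -
    have "cs = []" "bs = []" using lc H(2) that by auto
    then show ?thesis using shb[of 1] shc[of 1] that d2 by simp
  qed
  moreover have "degree (sh_c a n) \<ge> degree (sh_b a n) + 2"
    using shb[of n] shc[of n] n d1 H(2) lc by (simp add: nth_append)
  ultimately show ?thesis by blast
qed

lemma cfv_ratfun: "\<forall>x\<in>set bs. degree x \<ge> 1 \<Longrightarrow> is_ratfun (cfv bs)"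
proof -
  assume "\<forall>x\<in>set bs. degree x \<ge> 1"
  then obtain P Q where "Q \<noteq> 0" "cfv bs * poly_fls Q = poly_fls P" using cfv_rat by blast
  then have "cfv bs = poly_fls P / poly_fls Q" by (simp add: field_simps)
  then show ?thesis unfolding is_ratfun_def using \<open>Q \<noteq> 0\<close> by blast
qed

lemma stop_case:
  assumes sa: "small a" and st: "sh_stops a"
  shows "a = sh_beta a + sh_gamma a \<and> is_ratfun (sh_beta a) \<and> is_ratfun (sh_gamma a)"
proof -
  define k where "k = (SOME k. \<exists>bs cs. sh_state a k = Stop bs cs)"
  have "\<exists>bs cs. sh_state a k = Stop bs cs" unfolding k_def
    by (rule someI_ex) (use st in \<open>auto simp: sh_stops_def\<close>)
  then obtain bs cs where bc: "sh_state a k = Stop bs cs" by blast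
  have "SINV a k (sh_state a k)" using states[OF sa] .
  then have "a = cfv bs + cfv cs" "\<forall>x\<in>set bs. degree x \<ge> 1" "\<forall>x\<in>set cs. degree x \<ge> 1"
    unfolding SINV_def bc by auto
  moreover have "sh_beta a = cfv bs" "sh_gamma a = cfv cs"
    unfolding sh_beta_def sh_gamma_def using st bc k_def[symmetric] by simp_all
  ultimately show ?thesis using cfv_ratfun by metis
qed

lemma rational_stops:
  assumes sa: "small a" and q: "q \<noteq> 0" and aq: "a = poly_fls p / poly_fls q"
  shows "\<exists>k bs cs. sh_state a k = Stop bs cs \<and> 2 * length cs \<le> degree q"
proof -
  have ex: "\<exists>k bs cs. sh_state a k = Stop bs cs"
  proof (rule ccontr)
    assume ns: "\<not> ?thesis"
    define k where "k = Suc (degree q)"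
    have "SINV a k (sh_state a k)" using states[OF sa] .
    moreover have "\<not> (\<exists>bs cs. sh_state a k = Stop bs cs)" using ns by blast
    ultimately obtain bs cs where "sh_state a k = Run bs cs" "length bs = k" "INV a bs cs"
      unfolding SINV_def by blast
    then show False using rat_bound[OF sa _ q aq, of bs cs] unfolding INV_def k_def by simp
  qed
  define k0 where "k0 = (LEAST k. \<exists>bs cs. sh_state a k = Stop bs cs)"
  have ex': "\<exists>k. \<exists>bs cs. sh_state a k = Stop bs cs" using ex by blast
  have k0: "\<exists>bs cs. sh_state a k0 = Stop bs cs" unfolding k0_def by (rule LeastI_ex[OF ex'])
  have "k0 \<noteq> 0"
  proof
    assume "k0 = 0"
    then show False using k0 by (simp add: sh_state_0)
  qed
  then have Suc: "Suc (k0 - 1) = k0" by simp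
  have "\<not> (\<exists>bs cs. sh_state a (k0 - 1) = Stop bs cs)"
    using not_less_Least[of "k0 - 1" "\<lambda>k. \<exists>bs cs. sh_state a k = Stop bs cs"] \<open>k0 \<noteq> 0\<close>
    unfolding k0_def by simp
  moreover have "SINV a (k0 - 1) (sh_state a (k0 - 1))" using states[OF sa] .
  ultimately obtain bs cs where st: "sh_state a (k0 - 1) = Run bs cs" and I: "INV a bs cs"
    unfolding SINV_def by blast
  have stk: "sh_state a k0 = sstep a (Run bs cs)" using sh_state_Suc[of a "k0 - 1"] Suc st by simp
  have b: "2 * length cs \<le> degree q" using rat_bound[OF sa I q aq] .
  from sstep_Run[OF sa I] show ?thesis
  proof (elim disjE exE conjE)
    assume "sstep a (Run bs cs) = Stop bs cs"
    then show ?thesis using stk b by auto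
  next
    fix b' assume "sstep a (Run bs cs) = Stop (bs @ [b']) cs"
    then show ?thesis using stk b by auto
  next
    fix b' c assume "sstep a (Run bs cs) = Run (bs @ [b']) (cs @ [c])"
    then show ?thesis using stk k0 by simp
  qed
qed

theorem theorem4p3:
  fixes \<alpha> :: "'a::field fls"
  assumes a0: "fls_polypart \<alpha> = 0"
  shows
    "(\<forall>k. sh_state \<alpha> k \<noteq> Fail)
   \<and> (\<not> sh_stops \<alpha> \<longrightarrow> (\<forall>n. b_defined \<alpha> n \<and> c_defined \<alpha> n)
        \<and> convergent (sh_bcf \<alpha>) \<and> convergent (sh_ccf \<alpha>))
   \<and> \<alpha> = sh_beta \<alpha> + sh_gamma \<alpha>
   \<and> (\<forall>n\<ge>1. b_defined \<alpha> n \<longrightarrow>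
        (\<forall>i. 1 \<le> i \<and> i \<le> n - 1 \<longrightarrow> cfq (\<alpha> - sh_bcf \<alpha> n) i = Some (sh_c \<alpha> i)))
   \<and> (\<forall>n\<ge>1. c_defined \<alpha> n \<longrightarrow>
        (\<forall>i. 1 \<le> i \<and> i \<le> n \<longrightarrow> cfq (\<alpha> - sh_ccf \<alpha> n) i = Some (sh_b \<alpha> i)
                                \<and> cfq (\<alpha> - sh_bcf \<alpha> n) i = Some (sh_c \<alpha> i)))
   \<and> (c_defined \<alpha> 1 \<longrightarrow> degree (sh_c \<alpha> 1) \<ge> 2 * degree (sh_b \<alpha> 1) + 1)
   \<and> (\<forall>n\<ge>2. (b_defined \<alpha> n \<longrightarrow> degree (sh_b \<alpha> n) \<ge> degree (sh_c \<alpha> (n - 1)) + 2)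
           \<and> (c_defined \<alpha> n \<longrightarrow> degree (sh_c \<alpha> n) \<ge> degree (sh_b \<alpha> n) + 2))
   \<and> (\<forall>p q. q \<noteq> 0 \<and> \<alpha> = poly_fls p / poly_fls q \<longrightarrow>
        (\<exists>k bs cs. sh_state \<alpha> k = Stop bs cs \<and> 2 * length cs \<le> degree q)
        \<and> is_ratfun (sh_beta \<alpha>) \<and> is_ratfun (sh_gamma \<alpha>))"
proof -
  have sa: "small \<alpha>" using a0 polypart_eq0_iff by blast
  have P1: "\<forall>k. sh_state \<alpha> k \<noteq> Fail" using no_fail[OF sa] by blast
  have P2: "\<not> sh_stops \<alpha> \<longrightarrow> (\<forall>n. b_defined \<alpha> n \<and> c_defined \<alpha> n)
        \<and> convergent (sh_bcf \<alpha>) \<and> convergent (sh_ccf \<alpha>)" using nonstop[OF sa] by blast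
  have P3: "\<alpha> = sh_beta \<alpha> + sh_gamma \<alpha>"
  proof (cases "sh_stops \<alpha>")
    case True then show ?thesis using stop_case[OF sa] by blast
  next
    case False then show ?thesis using nonstop[OF sa False] unfolding sh_beta_def sh_gamma_def by simp
  qed
  have P4: "\<forall>n\<ge>1. b_defined \<alpha> n \<longrightarrow>
        (\<forall>i. 1 \<le> i \<and> i \<le> n - 1 \<longrightarrow> cfq (\<alpha> - sh_bcf \<alpha> n) i = Some (sh_c \<alpha> i))"
    using claim_b[OF sa] by blast
  have P5: "\<forall>n\<ge>1. c_defined \<alpha> n \<longrightarrow>
        (\<forall>i. 1 \<le> i \<and> i \<le> n \<longrightarrow> cfq (\<alpha> - sh_ccf \<alpha> n) i = Some (sh_b \<alpha> i)
                                \<and> cfq (\<alpha> - sh_bcf \<alpha> n) i = Some (sh_c \<alpha> i))"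
    using claim_c[OF sa] by blast
  have P6: "c_defined \<alpha> 1 \<longrightarrow> degree (sh_c \<alpha> 1) \<ge> 2 * degree (sh_b \<alpha> 1) + 1"
    using claim_c[OF sa, of 1] by simp
  have P7: "\<forall>n\<ge>2. (b_defined \<alpha> n \<longrightarrow> degree (sh_b \<alpha> n) \<ge> degree (sh_c \<alpha> (n - 1)) + 2)
           \<and> (c_defined \<alpha> n \<longrightarrow> degree (sh_c \<alpha> n) \<ge> degree (sh_b \<alpha> n) + 2)"
    using claim_b[OF sa] claim_c[OF sa] by simp
  have P8: "\<forall>p q. q \<noteq> 0 \<and> \<alpha> = poly_fls p / poly_fls q \<longrightarrow>
        (\<exists>k bs cs. sh_state \<alpha> k = Stop bs cs \<and> 2 * length cs \<le> degree q)
        \<and> is_ratfun (sh_beta \<alpha>) \<and> is_ratfun (sh_gamma \<alpha>)"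
  proof (intro allI impI, elim conjE)
    fix p q :: "'a poly" assume q: "q \<noteq> 0" and aq: "\<alpha> = poly_fls p / poly_fls q"
    have ex: "\<exists>k bs cs. sh_state \<alpha> k = Stop bs cs \<and> 2 * length cs \<le> degree q"
      using rational_stops[OF sa q aq] .
    then have "sh_stops \<alpha>" unfolding sh_stops_def by blast
    then show "(\<exists>k bs cs. sh_state \<alpha> k = Stop bs cs \<and> 2 * length cs \<le> degree q)
        \<and> is_ratfun (sh_beta \<alpha>) \<and> is_ratfun (sh_gamma \<alpha>)"
      using ex stop_case[OF sa] by blast
  qed
  show ?thesis by (intro conjI P1 P2 P3 P4 P5 P6 P7 P8)
qed

end
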